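(* There exist a compact metric space $X$ and a flow $\phi$ on $X$ which is not singular-expansive but such that, for every compact invariant set $\Lambda\subset X$ with $\Lambda\cap Sing(\phi)=\emptyset$, the restricted flow $\phi|_\Lambda$ is expansive.
   Context: A flow is a continuous $\phi:\mathbb{R}\times X\to X$ with $\phi_0=\mathrm{id}$, $\phi_{t+s}=\phi_t\circ\phi_s$; $\phi_I(x)=\{\phi_t(x):t\in I\}$; $Sing(\phi)$ is the set of fixed points; $dist(z,A)=\inf_{a\in A}d(z,a)$, with $dist(z,\emptyset)=diam(X)$. $\phi$ is singular-expansive if for every $\epsilon>0$ there is $\delta>0$ such that whenever $x,y\in X$ and an increasing homeomorphism $s:\mathbb{R}\to\mathbb{R}$ satisfy $d(\phi_t(x),\phi_{s(t)}(y))\le\delta\,dist(\phi_t(x),Sing(\phi))$ for all $t$, then $\phi_{s(t_0)}(y)\in\phi_{[t_0-\epsilon,t_0+\epsilon]}(x)$ for some $t_0\in\mathbb{R}$. A flow $\psi$ on a compact metric space $Y$ is expansive if for every $\epsilon>0$ there is $\delta>0$ such that whenever $x,y\in Y$ and a continuous $s:\mathbb{R}\to\mathbb{R}$ with $s(0)=0$ satisfy $d(\psi_t(x),\psi_{s(t)}(y))\le\delta$ for all $t$, then $y\in\psi_{[-\epsilon,\epsilon]}(x)$. *)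

theory Defs
  imports "HOL-Analysis.Analysis"
begin

definition is_flow :: "'a set \<Rightarrow> ('a \<Rightarrow> 'a \<Rightarrow> real) \<Rightarrow> (real \<Rightarrow> 'a \<Rightarrow> 'a) \<Rightarrow> bool" where
  "is_flow X d phi \<longleftrightarrow>
     continuous_map (prod_topology euclideanreal (Metric_space.mtopology X d))
                    (Metric_space.mtopology X d) (\<lambda>(t, x). phi t x)
   \<and> (\<forall>x\<in>X. phi 0 x = x)
   \<and> (\<forall>t s. \<forall>x\<in>X. phi (t + s) x = phi t (phi s x))"

definition Sing :: "'a set \<Rightarrow> (real \<Rightarrow> 'a \<Rightarrow> 'a) \<Rightarrow> 'a set" where
  "Sing X phi = {x \<in> X. \<forall>t. phi t x = x}"

definition orbit_seg :: "(real \<Rightarrow> 'a \<Rightarrow> 'a) \<Rightarrow> real set \<Rightarrow> 'a \<Rightarrow> 'a set" where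
  "orbit_seg phi I x = (\<lambda>t. phi t x) ` I"

definition mdiam :: "'a set \<Rightarrow> ('a \<Rightarrow> 'a \<Rightarrow> real) \<Rightarrow> real" where
  "mdiam X d = Sup {d x y | x y. x \<in> X \<and> y \<in> X}"

definition distset :: "'a set \<Rightarrow> ('a \<Rightarrow> 'a \<Rightarrow> real) \<Rightarrow> 'a \<Rightarrow> 'a set \<Rightarrow> real" where
  "distset X d z A = (if A = {} then mdiam X d else Inf {d z a | a. a \<in> A})"

definition increasing_homeo :: "(real \<Rightarrow> real) \<Rightarrow> bool" where
  "increasing_homeo s \<longleftrightarrow> strict_mono s \<and> continuous_on UNIV s \<and> surj s"

definition singular_expansive :: "'a set \<Rightarrow> ('a \<Rightarrow> 'a \<Rightarrow> real) \<Rightarrow> (real \<Rightarrow> 'a \<Rightarrow> 'a) \<Rightarrow> bool" where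
  "singular_expansive X d phi \<longleftrightarrow>
    (\<forall>\<epsilon>>0. \<exists>\<delta>>0. \<forall>x\<in>X. \<forall>y\<in>X. \<forall>s. increasing_homeo s \<and>
        (\<forall>t. d (phi t x) (phi (s t) y) \<le> \<delta> * distset X d (phi t x) (Sing X phi))
        \<longrightarrow> (\<exists>t0. phi (s t0) y \<in> orbit_seg phi {t0 - \<epsilon> .. t0 + \<epsilon>} x))"

definition expansive_flow :: "'a set \<Rightarrow> ('a \<Rightarrow> 'a \<Rightarrow> real) \<Rightarrow> (real \<Rightarrow> 'a \<Rightarrow> 'a) \<Rightarrow> bool" where
  "expansive_flow Y d psi \<longleftrightarrow>
    (\<forall>\<epsilon>>0. \<exists>\<delta>>0. \<forall>x\<in>Y. \<forall>y\<in>Y. \<forall>s. continuous_on UNIV s \<and> s 0 = 0 \<and>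
        (\<forall>t. d (psi t x) (psi (s t) y) \<le> \<delta>)
        \<longrightarrow> y \<in> orbit_seg psi {-\<epsilon> .. \<epsilon>} x)"

definition invariant_set :: "(real \<Rightarrow> 'a \<Rightarrow> 'a) \<Rightarrow> 'a set \<Rightarrow> bool" where
  "invariant_set phi L \<longleftrightarrow> (\<forall>t. \<forall>x\<in>L. phi t x \<in> L)"

end

theory Submission
  imports Defs
begin


lemma mtop: "Metric_space.mtopology (S::real set) dist = top_of_set S"
proof -
  interpret Submetric UNIV dist S by unfold_locales auto
  show ?thesis using mtopology_submetric by simp
qed

lemma ms: "Metric_space (S::real set) dist"
  using Met_TC.subspace by blast

definition psi :: "real \<Rightarrow> real \<Rightarrow> real" where
  "psi T u = u * exp T / (1 - u + u * exp T)"

lemma D_ge: fixes u T :: real assumes "0 \<le> u" "u \<le> 1" shows "min 1 (exp T) \<le> 1 - u + u * exp T"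
proof -
  have a: "(1-u)*min 1 (exp T) \<le> (1-u)" using assms mult_left_mono[of "min 1 (exp T)" 1 "1-u"] by simp
  have b: "u*min 1 (exp T) \<le> u * exp T" using assms mult_left_mono[of "min 1 (exp T)" "exp T" u] by simp
  have "(1-u)*min 1 (exp T) + u*min 1 (exp T) = min 1 (exp T)" by (simp add: algebra_simps)
  thus ?thesis using a b by linarith
qed

lemma D_pos: fixes u T :: real shows "0 \<le> u \<Longrightarrow> u \<le> 1 \<Longrightarrow> 0 < 1 - u + u * exp T"
proof -
  assume "0 \<le> u" "u \<le> 1"
  have "0 < min 1 (exp T)" by (simp add: min_def)
  also have "\<dots> \<le> 1 - u + u * exp T" using D_ge \<open>0 \<le> u\<close> \<open>u \<le> 1\<close> by blast
  finally show ?thesis .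
qed

lemma psi_range: "0 \<le> u \<Longrightarrow> u \<le> 1 \<Longrightarrow> 0 \<le> psi T u \<and> psi T u \<le> 1"
  using D_pos[of u T] unfolding psi_def by (auto simp: divide_simps)

lemma psi_range_open: "0 < u \<Longrightarrow> u < 1 \<Longrightarrow> 0 < psi T u \<and> psi T u < 1"
  using D_pos[of u T] unfolding psi_def by (auto simp: divide_simps)

lemma psi_0 [simp]: "psi T 0 = 0" and psi_1 [simp]: "psi T 1 = 1" and psi_T0 [simp]: "psi 0 u = u"
  unfolding psi_def by auto

lemma psi_add: assumes "0 \<le> u" "u \<le> 1" shows "psi (T + S) u = psi T (psi S u)"
proof -
  have D: "0 < 1 - u + u * exp S" "0 < 1 - u + u * exp (T+S)" using D_pos assms by auto
  define D1 where "D1 = 1 - u + u * exp S"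
  define D2 where "D2 = 1 - u + u * exp (T+S)"
  have D': "D1 > 0" "D2 > 0" using D D1_def D2_def by auto
  have ps: "psi S u = u * exp S / D1" unfolding psi_def D1_def by simp
  have "1 - psi S u + psi S u * exp T = (D1 - u * exp S + u * exp S * exp T) / D1"
    using D' unfolding ps by (simp add: field_simps)
  also have "D1 - u * exp S + u * exp S * exp T = D2" unfolding D1_def D2_def by (simp add: exp_add algebra_simps)
  finally have den: "1 - psi S u + psi S u * exp T = D2 / D1" .
  have "psi T (psi S u) = psi S u * exp T / (1 - psi S u + psi S u * exp T)" by (rule psi_def)
  also have "\<dots> = (u * exp S / D1) * exp T / (D2 / D1)" by (subst den) (simp add: ps)
  also have "\<dots> = u * exp (T + S) / D2" using D' by (simp add: field_simps exp_add)
  finally show ?thesis unfolding psi_def D2_def by simp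
qed

lemma psi_diff_formula: assumes "0 \<le> p" "p \<le> 1"
  shows "psi c p - p = p * (1 - p) * (exp c - 1) / (1 + p * (exp c - 1))"
  using D_pos[OF assms, of c] unfolding psi_def by (simp add: field_simps)

lemma psi_x_lip: assumes "0 \<le> u" "u \<le> 1" "0 \<le> v" "v \<le> 1"
  shows "\<bar>psi T u - psi T v\<bar> \<le> exp \<bar>T\<bar> * \<bar>u - v\<bar>"
proof -
  define Du where "Du = 1 - u + u * exp T"
  define Dv where "Dv = 1 - v + v * exp T"
  have pu: "min 1 (exp T) \<le> Du" "min 1 (exp T) \<le> Dv" using D_ge assms Du_def Dv_def by auto
  have m: "0 < min 1 (exp T)" by simp
  have Dp: "Du > 0" "Dv > 0" using pu m by linarith+
  have num: "u * exp T * Dv - v * exp T * Du = exp T * (u - v)" unfolding Du_def Dv_def by algebra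
  have "psi T u - psi T v = u * exp T / Du - v * exp T / Dv" unfolding psi_def Du_def Dv_def by simp
  also have "\<dots> = (u * exp T * Dv - v * exp T * Du) / (Du * Dv)" using Dp by (simp add: field_simps)
  finally have eq: "psi T u - psi T v = exp T * (u - v) / (Du * Dv)" using num by simp
  have "\<bar>psi T u - psi T v\<bar> = exp T * \<bar>u - v\<bar> / (Du * Dv)"
    using Dp by (simp add: eq abs_mult abs_of_pos)
  also have "\<dots> \<le> exp T * \<bar>u - v\<bar> / (min 1 (exp T) * min 1 (exp T))"
    using pu m Dp by (intro divide_left_mono mult_mono) auto
  also have "\<dots> = exp \<bar>T\<bar> * \<bar>u - v\<bar>"
  proof (cases "T \<ge> 0")
    case True then show ?thesis by simp
  next
    case False
    then have "min 1 (exp T) = exp T" by simp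
    moreover have "exp T / (exp T * exp T) = exp (- T)" by (simp add: exp_minus field_simps)
    ultimately show ?thesis using False by (simp add: exp_minus field_simps)
  qed
  finally show ?thesis .
qed

lemma frac_le_ln: "0 \<le> (x::real) \<Longrightarrow> x / (1 + x) \<le> ln (1 + x)"
  using ln_add1_ge[of x] by (simp add: add.commute)

lemma psi_t_mono_lip: assumes "0 \<le> u" "u \<le> 1" "T \<le> S"
  shows "0 \<le> psi S u - psi T u \<and> psi S u - psi T u \<le> S - T"
proof -
  define p where "p = psi T u"
  have p: "0 \<le> p" "p \<le> 1" using psi_range assms p_def by auto
  have e: "psi S u = psi (S - T) p" using psi_add[OF assms(1,2), of "S-T" T] p_def by simp
  define w where "w = exp (S - T) - 1"
  have w: "0 \<le> w" using assms w_def by simp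
  have f: "psi S u - psi T u = p * (1 - p) * w / (1 + p * w)"
    using psi_diff_formula[OF p, of "S-T"] e p_def w_def by simp
  have pw: "0 \<le> p * w" using p w by simp
  have "p * (1 - p) * w / (1 + p * w) \<le> p * w / (1 + p * w)"
  proof (intro divide_right_mono)
    have "p * (1 - p) \<le> p" using p by (simp add: mult_left_le)
    thus "p * (1 - p) * w \<le> p * w" using w by (rule mult_right_mono)
  qed (use pw in simp)
  also have "\<dots> \<le> ln (1 + p * w)" using frac_le_ln pw by blast
  also have "\<dots> \<le> ln (1 + w)"
  proof -
    have "p * w \<le> w" using p w by (simp add: mult_left_le_one_le)
    thus ?thesis using pw by (subst ln_le_cancel_iff) auto
  qed
  also have "\<dots> = S - T" using w_def by simp
  finally show ?thesis using f p w pw by simp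
qed



lemma psi_strict: assumes "0 < u" "u < 1" "T < S" shows "psi T u < psi S u"
proof -
  define p where "p = psi T u"
  have p: "0 < p" "p < 1" using psi_range_open assms p_def by auto
  have e: "psi S u = psi (S - T) p" using psi_add[of u "S-T" T] assms p_def by simp
  define w where "w = exp (S - T) - 1"
  have w: "0 < w" using assms w_def by simp
  have f: "psi S u - psi T u = p * (1 - p) * w / (1 + p * w)"
    using psi_diff_formula[of p "S-T"] p e p_def w_def by simp
  have "0 < p * (1 - p) * w / (1 + p * w)" using p w by (simp add: zero_less_mult_iff add_pos_pos)
  thus ?thesis using f by simp
qed

lemma psi_t_lip: assumes "0 \<le> u" "u \<le> 1" shows "\<bar>psi S u - psi T u\<bar> \<le> \<bar>S - T\<bar>"
proof (cases "T \<le> S")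
  case True then show ?thesis using psi_t_mono_lip[OF assms True] by simp
next
  case False then show ?thesis using psi_t_mono_lip[OF assms, of S T] by simp
qed

definition aa :: "nat \<Rightarrow> real" where "aa k = 1 / 2^(k+1)"
definition tau :: "nat \<Rightarrow> real" where "tau k = real k + 1"
definition kidx :: "real \<Rightarrow> nat" where "kidx x = (LEAST k. aa k < x)"
definition F :: "nat \<Rightarrow> real \<Rightarrow> real \<Rightarrow> real" where
  "F k t x = aa k + aa k * psi (t / tau k) (x / aa k - 1)"
definition phi :: "real \<Rightarrow> real \<Rightarrow> real" where
  "phi t x = (if x \<le> 0 then x else F (kidx x) t x)"

lemma aa_pos: "0 < aa k" unfolding aa_def by simp
lemma aa_le: "aa k \<le> 1/2" unfolding aa_def by (simp add: divide_simps)
lemma aa_Suc: "2 * aa (Suc k) = aa k" unfolding aa_def by simp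
lemma aa_mono: "j \<le> k \<Longrightarrow> aa k \<le> aa j"
  unfolding aa_def by (simp add: divide_simps power_increasing)
lemma aa_lt2: "j < k \<Longrightarrow> 2 * aa k \<le> aa j"
proof -
  assume "j < k" then have "Suc j \<le> k" by simp
  then have "aa k \<le> aa (Suc j)" by (rule aa_mono)
  thus ?thesis using aa_Suc[of j] by simp
qed
lemma tau_ge: "1 \<le> tau k" unfolding tau_def by simp

lemma kidx_ex: "0 < x \<Longrightarrow> \<exists>k. aa k < x"
proof -
  assume "0 < x"
  obtain n where n: "(1/2::real)^n < x" using real_arch_pow_inv[OF \<open>0 < x\<close>, of "1/2"] by auto
  have "aa n \<le> (1/2)^n" unfolding aa_def by (simp add: power_divide divide_simps)
  thus ?thesis using n by (intro exI[of _ n]) simp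
qed

lemma kidx_prop: assumes "0 < x" "x \<le> 1" shows "aa (kidx x) < x \<and> x \<le> 2 * aa (kidx x)"
proof -
  have a: "aa (kidx x) < x" unfolding kidx_def using kidx_ex[OF assms(1)] by (metis LeastI)
  have "x \<le> 2 * aa (kidx x)"
  proof (cases "kidx x")
    case 0 then show ?thesis using assms by (simp add: aa_def)
  next
    case (Suc j)
    then have "\<not> aa j < x" unfolding kidx_def by (metis lessI not_less_Least)
    thus ?thesis using aa_Suc[of j] Suc by simp
  qed
  with a show ?thesis by simp
qed

lemma kidx_unique: assumes "aa j < x" "x \<le> 2 * aa j" shows "kidx x = j"
proof -
  have le: "kidx x \<le> j" unfolding kidx_def using assms(1) by (rule Least_le)
  have "aa (kidx x) < x" unfolding kidx_def using assms(1) by (metis LeastI)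
  moreover have "kidx x < j \<Longrightarrow> False"
  proof -
    assume "kidx x < j"
    then have "2 * aa j \<le> aa (kidx x)" by (rule aa_lt2)
    thus False using assms \<open>aa (kidx x) < x\<close> by linarith
  qed
  ultimately show ?thesis using le by fastforce
qed

lemma u_range: assumes "aa k \<le> x" "x \<le> 2 * aa k" shows "0 \<le> x / aa k - 1" "x / aa k - 1 \<le> 1"
  using assms aa_pos[of k] by (auto simp: divide_simps)

lemma F_range: assumes "aa k \<le> x" "x \<le> 2 * aa k" shows "aa k \<le> F k t x" "F k t x \<le> 2 * aa k"
  using psi_range[OF u_range[OF assms], of "t / tau k"] aa_pos[of k] unfolding F_def
  by (auto simp: mult_left_le)

lemma F_range_open: assumes "aa k < x" "x < 2 * aa k" shows "aa k < F k t x" "F k t x < 2 * aa k"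
proof -
  have "0 < x / aa k - 1" "x / aa k - 1 < 1" using assms aa_pos[of k] by (auto simp: divide_simps)
  from psi_range_open[OF this, of "t / tau k"] aa_pos[of k]
  show "aa k < F k t x" "F k t x < 2 * aa k" unfolding F_def by auto
qed

lemma F_right: "F k t (2 * aa k) = 2 * aa k" using aa_pos[of k] unfolding F_def by simp
lemma F_left: "F k t (aa k) = aa k" using aa_pos[of k] unfolding F_def by simp
lemma F_0: "aa k \<le> x \<Longrightarrow> x \<le> 2 * aa k \<Longrightarrow> F k 0 x = x" using aa_pos[of k] unfolding F_def by (simp add: field_simps)

lemma F_add: assumes "aa k \<le> x" "x \<le> 2 * aa k" shows "F k (t + s) x = F k t (F k s x)"
proof -
  have "F k s x / aa k - 1 = psi (s / tau k) (x / aa k - 1)" using aa_pos[of k] unfolding F_def by (simp add: field_simps)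
  moreover have "(t + s) / tau k = t / tau k + s / tau k" by (simp add: add_divide_distrib)
  ultimately show ?thesis using psi_add[OF u_range[OF assms]] unfolding F_def by simp
qed

lemma F_strict: assumes "aa k < x" "x < 2 * aa k" "s < t" shows "F k s x < F k t x"
proof -
  have "0 < x / aa k - 1" "x / aa k - 1 < 1" using assms aa_pos[of k] by (auto simp: divide_simps)
  moreover have "s / tau k < t / tau k" using assms tau_ge[of k] by (simp add: divide_strict_right_mono)
  ultimately have "psi (s / tau k) (x / aa k - 1) < psi (t / tau k) (x / aa k - 1)" by (rule psi_strict)
  thus ?thesis unfolding F_def using aa_pos[of k] by simp
qed

lemma F_xlip: assumes "aa k \<le> x" "x \<le> 2 * aa k" "aa k \<le> y" "y \<le> 2 * aa k"
  shows "\<bar>F k t x - F k t y\<bar> \<le> exp \<bar>t\<bar> * \<bar>x - y\<bar>"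
proof -
  have "\<bar>F k t x - F k t y\<bar> = aa k * \<bar>psi (t / tau k) (x / aa k - 1) - psi (t / tau k) (y / aa k - 1)\<bar>"
    unfolding F_def using aa_pos[of k] by (simp add: abs_mult right_diff_distrib[symmetric])
  also have "\<dots> \<le> aa k * (exp \<bar>t / tau k\<bar> * \<bar>(x / aa k - 1) - (y / aa k - 1)\<bar>)"
    by (rule mult_left_mono[OF psi_x_lip[OF u_range[OF assms(1,2)] u_range[OF assms(3,4)]]]) (simp add: less_imp_le aa_pos)
  also have "\<dots> = exp \<bar>t / tau k\<bar> * \<bar>x - y\<bar>"
    using aa_pos[of k] by (simp add: field_simps abs_div abs_mult)
  also have "\<dots> \<le> exp \<bar>t\<bar> * \<bar>x - y\<bar>"
  proof -
    have "\<bar>t / tau k\<bar> \<le> \<bar>t\<bar>" using tau_ge[of k] by (simp add: abs_div divide_le_eq mult_le_cancel_left1)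
    thus ?thesis by (intro mult_right_mono) auto
  qed
  finally show ?thesis .
qed

lemma F_tlip: assumes "aa k \<le> x" "x \<le> 2 * aa k"
  shows "\<bar>F k s x - F k t x\<bar> \<le> \<bar>s - t\<bar>"
proof -
  have "\<bar>F k s x - F k t x\<bar> = aa k * \<bar>psi (s / tau k) (x / aa k - 1) - psi (t / tau k) (x / aa k - 1)\<bar>"
    unfolding F_def using aa_pos[of k] by (simp add: abs_mult right_diff_distrib[symmetric])
  also have "\<dots> \<le> aa k * \<bar>s / tau k - t / tau k\<bar>"
    using psi_t_lip[OF u_range[OF assms]] aa_pos[of k] by (intro mult_left_mono) auto
  also have "\<dots> \<le> 1 * \<bar>s - t\<bar>"
  proof (intro mult_mono)
    show "aa k \<le> 1" using aa_le[of k] by simp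
    have "\<bar>s / tau k - t / tau k\<bar> = \<bar>s - t\<bar> / tau k" using tau_ge[of k] by (simp add: diff_divide_distrib[symmetric] abs_div)
    also have "\<dots> \<le> \<bar>s - t\<bar>" using tau_ge[of k] by (simp add: divide_le_eq mult_le_cancel_left1)
    finally show "\<bar>s / tau k - t / tau k\<bar> \<le> \<bar>s - t\<bar>" .
  qed auto
  finally show ?thesis by simp
qed



lemma phi_F: assumes "aa k \<le> x" "x \<le> 2 * aa k" shows "phi t x = F k t x"
proof (cases "x = aa k")
  case True
  have "aa (Suc k) < x" "x \<le> 2 * aa (Suc k)" using True aa_Suc[of k] aa_pos[of "Suc k"] by auto
  then have "kidx x = Suc k" by (rule kidx_unique)
  then have "phi t x = F (Suc k) t (2 * aa (Suc k))" using True aa_pos[of k] aa_Suc[of k] unfolding phi_def by simp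
  also have "\<dots> = x" using F_right[of "Suc k" t] True aa_Suc[of k] by simp
  finally show ?thesis using True F_left by simp
next
  case False
  then have "aa k < x" using assms by simp
  then have "kidx x = k" using assms(2) by (rule kidx_unique)
  thus ?thesis unfolding phi_def using aa_pos[of k] \<open>aa k < x\<close> by simp
qed

lemma phi_zero [simp]: "phi t 0 = 0" unfolding phi_def by simp

lemma phi_range: assumes "0 \<le> x" "x \<le> 1" shows "0 \<le> phi t x \<and> phi t x \<le> 1"
proof (cases "x = 0")
  case True then show ?thesis by simp
next
  case False
  define k where "k = kidx x"
  have k: "aa k < x" "x \<le> 2 * aa k" using kidx_prop[of x] assms False k_def by auto
  have "phi t x = F k t x" using phi_F k by simp
  moreover have "2 * aa k \<le> 1" using aa_le[of k] by simp
  ultimately show ?thesis using F_range[of k x t] k aa_pos[of k] by auto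
qed

lemma phi_add: assumes "0 \<le> x" "x \<le> 1" shows "phi (t + s) x = phi t (phi s x)"
proof (cases "x = 0")
  case True then show ?thesis by simp
next
  case False
  define k where "k = kidx x"
  have k: "aa k < x" "x \<le> 2 * aa k" using kidx_prop[of x] assms False k_def by auto
  have r: "aa k \<le> F k s x" "F k s x \<le> 2 * aa k" using F_range k by auto
  have ps: "phi s x = F k s x" using phi_F[of k x s] k by simp
  have "phi t (phi s x) = F k t (F k s x)" using ps phi_F[OF r, of t] by simp
  also have "\<dots> = F k (t + s) x" using F_add k by simp
  finally show ?thesis using phi_F k by simp
qed

lemma phi_tlip: assumes "0 \<le> x" "x \<le> 1" shows "\<bar>phi s x - phi t x\<bar> \<le> \<bar>s - t\<bar>"
proof (cases "x = 0")
  case True then show ?thesis by simp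
next
  case False
  define k where "k = kidx x"
  have k: "aa k < x" "x \<le> 2 * aa k" using kidx_prop[of x] assms False k_def by auto
  show ?thesis using phi_F[of k x] k F_tlip[of k x s t] by simp
qed

lemma piece: assumes "0 < x" "x \<le> 1" shows "\<exists>k. aa k < x \<and> x \<le> 2 * aa k"
  using kidx_prop[OF assms] by blast

lemma phi_xlip_le: assumes "0 \<le> x" "x \<le> y" "y \<le> 1"
  shows "\<bar>phi t y - phi t x\<bar> \<le> exp \<bar>t\<bar> * \<bar>y - x\<bar>"
proof -
  define C where "C = exp \<bar>t\<bar>"
  have C: "1 \<le> C" unfolding C_def by simp
  show ?thesis
  proof (cases "x = y")
    case True then show ?thesis by simp
  next
    case False
    then have xy: "x < y" using assms by simp
    obtain i where i: "aa i < y" "y \<le> 2 * aa i" using piece[of y] assms xy by auto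
    have yi: "phi t y = F i t y" using phi_F i by simp
    have upy: "phi t y - aa i \<le> C * (y - aa i)"
      using F_xlip[of i y "aa i" t] i yi F_left[of i t] C_def by simp
    have lowy: "aa i \<le> phi t y" using F_range[of i y t] i yi by simp
    show ?thesis
    proof (cases "x = 0")
      case True
      have "phi t y - phi t x \<le> C * (y - aa i) + aa i" using upy True by simp
      also have "\<dots> \<le> C * (y - aa i) + C * aa i" using C aa_pos[of i] by simp
      finally have "phi t y - phi t x \<le> C * (y - x)" using True by (simp add: algebra_simps)
      moreover have "0 \<le> phi t y - phi t x" using True lowy aa_pos[of i] by simp
      ultimately show ?thesis using xy C_def by simp
    next
      case False
      obtain j where j: "aa j < x" "x \<le> 2 * aa j" using piece[of x] assms xy False by auto
      have xj: "phi t x = F j t x" using phi_F j by simp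
      show ?thesis
      proof (cases "i = j")
        case True
        then show ?thesis using F_xlip[of j y x t] i j xj yi by simp
      next
        case ij: False
        have "i < j"
        proof (rule ccontr)
          assume "\<not> i < j"
          then have "j < i" using ij by simp
          then have "2 * aa i \<le> aa j" by (rule aa_lt2)
          thus False using i j xy by linarith
        qed
        then have ji: "2 * aa j \<le> aa i" by (rule aa_lt2)
        have upx: "2 * aa j - phi t x \<le> C * (2 * aa j - x)"
          using F_xlip[of j "2 * aa j" x t] j xj F_right[of j t] C_def aa_pos[of j] by simp
        have highx: "phi t x \<le> 2 * aa j" using F_range[of j x t] j xj by simp
        have "phi t y - phi t x = (phi t y - aa i) + (aa i - 2 * aa j) + (2 * aa j - phi t x)" by simp
        also have "\<dots> \<le> C * (y - aa i) + C * (aa i - 2 * aa j) + C * (2 * aa j - x)"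
          using upy upx ji C by (intro add_mono) (auto simp: mult_le_cancel_right1)
        also have "\<dots> = C * (y - x)" by (simp add: algebra_simps)
        finally have "phi t y - phi t x \<le> C * (y - x)" .
        moreover have "0 \<le> phi t y - phi t x" using lowy highx ji by simp
        ultimately show ?thesis using xy C_def by simp
      qed
    qed
  qed
qed

lemma phi_xlip: assumes "0 \<le> x" "x \<le> 1" "0 \<le> y" "y \<le> 1"
  shows "\<bar>phi t y - phi t x\<bar> \<le> exp \<bar>t\<bar> * \<bar>y - x\<bar>"
proof (cases "x \<le> y")
  case True then show ?thesis using phi_xlip_le assms by simp
next
  case False then show ?thesis using phi_xlip_le[of y x t] assms by (simp add: abs_minus_commute)
qed

lemma phi_cont: "continuous_on (UNIV \<times> {0..1}) (\<lambda>(t, x). phi t x)"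
  unfolding continuous_on_iff
proof (intro ballI allI impI)
  fix z :: "real \<times> real" and e :: real assume z: "z \<in> UNIV \<times> {0..(1::real)}" and e: "(0::real) < e"
  obtain t x :: real where zz: "z = (t, x)" by (cases z)
  define C where "C = 1 + exp \<bar>t\<bar>"
  have C: "0 < C" unfolding C_def by (smt (verit) exp_gt_zero)
  show "\<exists>d>0. \<forall>z'\<in>UNIV \<times> {0..1}. dist z' z < d \<longrightarrow> dist ((\<lambda>(t, x). phi t x) z') ((\<lambda>(t, x). phi t x) z) < e"
  proof (intro exI[of _ "e / C"] conjI ballI impI)
    show "0 < e / C" using e C by simp
    fix z' :: "real \<times> real" assume z': "z' \<in> UNIV \<times> {0..(1::real)}" and d: "dist z' z < e / C"
    obtain s y :: real where zz': "z' = (s, y)" by (cases z')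
    have y: "0 \<le> y" "y \<le> 1" using z' zz' by auto
    have x: "0 \<le> x" "x \<le> 1" using z zz by auto
    have d1: "\<bar>s - t\<bar> \<le> dist z' z" using dist_fst_le[of z' z] zz zz' by (simp add: dist_real_def)
    have d2: "\<bar>y - x\<bar> \<le> dist z' z" using dist_snd_le[of z' z] zz zz' by (simp add: dist_real_def)
    have "\<bar>phi s y - phi t x\<bar> \<le> \<bar>phi s y - phi t y\<bar> + \<bar>phi t y - phi t x\<bar>" by simp
    also have "\<dots> \<le> \<bar>s - t\<bar> + exp \<bar>t\<bar> * \<bar>y - x\<bar>"
      using phi_tlip[OF y, of s t] phi_xlip[OF x y, of t] by simp
    also have "\<dots> \<le> dist z' z + exp \<bar>t\<bar> * dist z' z"
      using d1 d2 by (intro add_mono mult_left_mono) auto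
    also have "\<dots> = C * dist z' z" unfolding C_def by (simp add: algebra_simps)
    also have "\<dots> < C * (e / C)" using d C by (intro mult_strict_left_mono) auto
    also have "\<dots> = e" using C by simp
    finally show "dist ((\<lambda>(t, x). phi t x) z') ((\<lambda>(t, x). phi t x) z) < e"
      using zz zz' by (simp add: dist_real_def)
  qed
qed



abbreviation "XX \<equiv> {0..(1::real)}"

lemma sing_0: "0 \<in> Sing XX phi" unfolding Sing_def by simp

lemma sing_right: "2 * aa k \<in> Sing XX phi"
proof -
  have r: "aa k \<le> 2 * aa k" "2 * aa k \<le> 2 * aa k" using aa_pos[of k] by auto
  have "2 * aa k \<le> 1" using aa_le[of k] by simp
  moreover have "\<forall>t. phi t (2 * aa k) = 2 * aa k" using phi_F[OF r] F_right by simp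
  ultimately show ?thesis unfolding Sing_def using aa_pos[of k] by simp
qed

lemma sing_gap: assumes "aa k < w" "w < 2 * aa k" shows "w \<notin> Sing XX phi"
proof
  assume "w \<in> Sing XX phi"
  then have "phi 1 w = w" unfolding Sing_def by auto
  moreover have "phi 1 w = F k 1 w" using phi_F[of k w] assms by simp
  moreover have "F k 0 w < F k 1 w" using F_strict[OF assms, of 0 1] by simp
  moreover have "F k 0 w = w" using F_0[of k w] assms by simp
  ultimately show False by simp
qed

lemma phi_t0: assumes "0 \<le> x" "x \<le> 1" shows "phi 0 x = x"
proof (cases "x = 0")
  case True then show ?thesis by simp
next
  case False
  then obtain k where k: "aa k < x" "x \<le> 2 * aa k" using piece[of x] assms by auto
  thus ?thesis using phi_F[of k x 0] F_0[of k x] by simp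
qed

lemma flow: "is_flow XX dist phi"
proof -
  have top: "prod_topology euclideanreal (top_of_set XX) = top_of_set (UNIV \<times> XX)"
    using subtopology_Times[of euclideanreal euclideanreal UNIV XX] by simp
  have "(\<lambda>(t, x). phi t x) \<in> UNIV \<times> XX \<rightarrow> XX" using phi_range by auto
  then show ?thesis unfolding is_flow_def mtop top
    using phi_cont phi_add by (auto simp: phi_t0)
qed



lemma no_L: assumes "L \<subseteq> XX" "compact L" "invariant_set phi L" "L \<inter> Sing XX phi = {}"
  shows "L = {}"
proof (rule ccontr)
  assume "L \<noteq> {}"
  then obtain x where x: "x \<in> L" by auto
  have "x \<noteq> 0" using x assms(4) sing_0 by auto
  then obtain k where k: "aa k < x" "x \<le> 2 * aa k" using piece[of x] x assms(1) by force
  define K where "K = L \<inter> {aa k .. 2 * aa k}"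
  have "compact K" unfolding K_def using assms(2) by (intro compact_Int_closed) auto
  moreover have "K \<noteq> {}" using x k K_def by auto
  ultimately obtain M where M: "M \<in> K" "\<forall>y\<in>K. y \<le> M" using compact_attains_sup by blast
  have "x \<le> M" using M x k K_def by auto
  have "M \<noteq> 2 * aa k" using M assms(4) sing_right[of k] K_def by auto
  then have Mo: "aa k < M" "M < 2 * aa k" using M \<open>x \<le> M\<close> k K_def by auto
  have "phi 1 M \<in> L" using assms(3) M K_def unfolding invariant_set_def by auto
  moreover have "phi 1 M = F k 1 M" using phi_F[of k M] Mo by simp
  moreover have "M < F k 1 M" using F_strict[OF Mo, of 0 1] F_0[of k M] Mo by simp
  moreover have "F k 1 M \<le> 2 * aa k" "aa k \<le> F k 1 M" using F_range[of k M 1] Mo by auto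
  ultimately have in1: "phi 1 M \<in> K" and lt: "M < phi 1 M" unfolding K_def by auto
  have "phi 1 M \<le> M" using M(2) in1 by blast
  thus False using lt by linarith
qed

lemma distset_lower: assumes "aa k < z" "z < 2 * aa k" "0 < b"
  "b \<le> z - aa k" "b \<le> 2 * aa k - z"
  shows "b \<le> distset XX dist z (Sing XX phi)"
proof -
  have ne: "Sing XX phi \<noteq> {}" using sing_0 by auto
  have "b \<le> Inf {dist z a | a. a \<in> Sing XX phi}"
  proof (rule cInf_greatest)
    show "{dist z a | a. a \<in> Sing XX phi} \<noteq> {}" using ne by auto
    fix r assume "r \<in> {dist z a | a. a \<in> Sing XX phi}"
    then obtain w where w: "w \<in> Sing XX phi" "r = dist z w" by auto
    have "\<not> (aa k < w \<and> w < 2 * aa k)" using sing_gap w by blast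
    then show "b \<le> r" using w assms by (auto simp: dist_real_def)
  qed
  thus ?thesis unfolding distset_def using ne by simp
qed

lemma not_sexp: "\<not> singular_expansive XX dist phi"
proof
  assume H: "singular_expansive XX dist phi"
  obtain \<delta> where d: "\<delta> > 0" and Hd: "\<forall>x\<in>XX. \<forall>y\<in>XX. \<forall>s. increasing_homeo s \<and>
        (\<forall>t. dist (phi t x) (phi (s t) y) \<le> \<delta> * distset XX dist (phi t x) (Sing XX phi))
        \<longrightarrow> (\<exists>t0. phi (s t0) y \<in> orbit_seg phi {t0 - 1 .. t0 + 1} x)"
    using H[unfolded singular_expansive_def, rule_format, OF zero_less_one] by blast
  have l: "0 < ln (1 + \<delta>)" using d by simp
  obtain n :: nat where n: "2 / ln (1 + \<delta>) < real n" using reals_Archimedean2 by blast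
  define k where "k = n"
  have tk: "2 / tau k < ln (1 + \<delta>)"
  proof -
    have "2 / ln (1 + \<delta>) < tau k" using n unfolding tau_def k_def by simp
    thus ?thesis using l tau_ge[of k] by (simp add: divide_simps mult.commute)
  qed
  define c where "c = 2 / tau k"
  have c: "0 < c" "exp c - 1 \<le> \<delta>"
  proof -
    show "0 < c" using tau_ge[of k] c_def by simp
    have "exp c \<le> exp (ln (1 + \<delta>))" using tk c_def by simp
    thus "exp c - 1 \<le> \<delta>" using d by simp
  qed
  define x where "x = 3/2 * aa k"
  have xo: "aa k < x" "x < 2 * aa k" using aa_pos[of k] x_def by auto
  have xu: "x / aa k - 1 = 1/2" using aa_pos[of k] x_def by simp
  have xX: "x \<in> XX" using aa_pos[of k] aa_le[of k] x_def by simp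
  define s where "s = (\<lambda>t::real. t + 2)"
  have hom: "increasing_homeo s" unfolding increasing_homeo_def s_def
  proof (intro conjI)
    show "strict_mono (\<lambda>t::real. t + 2)" by (rule strict_monoI) simp
    show "continuous_on UNIV (\<lambda>t::real. t + 2)" by (intro continuous_intros)
    show "surj (\<lambda>t::real. t + 2)" by (rule surjI[of _ "\<lambda>t. t - 2"]) simp
  qed
  have phx: "\<And>t. phi t x = aa k + aa k * psi (t / tau k) (1/2)"
    using phi_F[of k x] xo unfolding F_def xu by simp
  have cond: "\<forall>t. dist (phi t x) (phi (s t) x) \<le> \<delta> * distset XX dist (phi t x) (Sing XX phi)"
  proof
    fix t
    define p where "p = psi (t / tau k) (1/2)"
    have p: "0 < p" "p < 1" using psi_range_open[of "1/2" "t / tau k"] p_def by auto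
    have "(t + 2) / tau k = c + t / tau k" unfolding c_def by (simp add: add_divide_distrib)
    then have e2: "phi (s t) x = aa k + aa k * psi c p"
      using phx[of "t+2"] psi_add[of "1/2" c "t / tau k"] p_def s_def by simp
    have e1: "phi t x = aa k + aa k * p" using phx p_def by simp
    define w where "w = exp c - 1"
    have w: "0 \<le> w" "w \<le> \<delta>" using c w_def by auto
    have "dist (phi t x) (phi (s t) x) = aa k * (psi c p - p)"
    proof -
      have "psi c p - p = p * (1 - p) * w / (1 + p * w)" using psi_diff_formula[of p c] p w_def by simp
      moreover have "0 \<le> p * (1 - p) * w / (1 + p * w)" using p w by simp
      ultimately show ?thesis unfolding e1 e2 dist_real_def using aa_pos[of k]
        by (simp add: right_diff_distrib[symmetric] abs_mult)
    qed
    also have "\<dots> \<le> aa k * (p * (1 - p) * \<delta>)"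
    proof (intro mult_left_mono)
      have "psi c p - p = p * (1 - p) * w / (1 + p * w)" using psi_diff_formula[of p c] p w_def by simp
      also have "\<dots> \<le> p * (1 - p) * w / 1"
      proof (rule divide_left_mono)
        have "0 \<le> p * w" using p w by simp
        then show "1 \<le> 1 + p * w" "0 < (1 + p * w) * 1" by auto
        show "0 \<le> p * (1 - p) * w" using p w by simp
      qed
      also have "\<dots> = p * (1 - p) * w" by simp
      also have "\<dots> \<le> p * (1 - p) * \<delta>" using p w by (intro mult_left_mono) auto
      finally show "psi c p - p \<le> p * (1 - p) * \<delta>" .
    qed (use aa_pos[of k] in simp)
    also have "\<dots> = \<delta> * (aa k * (p * (1 - p)))" by (simp only: mult_ac)
    also have "\<dots> \<le> \<delta> * distset XX dist (phi t x) (Sing XX phi)"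
    proof (intro mult_left_mono)
      show "aa k * (p * (1 - p)) \<le> distset XX dist (phi t x) (Sing XX phi)"
      proof (rule distset_lower)
        show "aa k < phi t x" "phi t x < 2 * aa k" using e1 p aa_pos[of k] by auto
        show "0 < aa k * (p * (1 - p))" using p aa_pos[of k] by simp
        have q1: "p * (1 - p) \<le> p" using p mult_left_mono[of "1-p" 1 p] by simp
        have q2: "p * (1 - p) \<le> 1 - p" using p mult_right_mono[of p 1 "1-p"] by simp
        have "aa k * (p * (1 - p)) \<le> aa k * p" using q1 aa_pos[of k] by (intro mult_left_mono) auto
        also have "aa k * p = phi t x - aa k" using e1 by simp
        finally show "aa k * (p * (1 - p)) \<le> phi t x - aa k" .
        have "aa k * (p * (1 - p)) \<le> aa k * (1 - p)" using q2 aa_pos[of k] by (intro mult_left_mono) auto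
        also have "aa k * (1 - p) = 2 * aa k - phi t x" using e1 by (simp add: algebra_simps)
        finally show "aa k * (p * (1 - p)) \<le> 2 * aa k - phi t x" .
      qed
    qed (use d in simp)
    finally show "dist (phi t x) (phi (s t) x) \<le> \<delta> * distset XX dist (phi t x) (Sing XX phi)" .
  qed
  obtain t0 where t0: "phi (s t0) x \<in> orbit_seg phi {t0 - 1 .. t0 + 1} x"
    using mp[OF Hd[THEN bspec, OF xX, THEN bspec, OF xX, THEN spec, of s] conjI[OF hom cond]] by blast
  then obtain r where r: "r \<le> t0 + 1" "phi (t0 + 2) x = phi r x"
    unfolding orbit_seg_def s_def by auto
  have "F k r x < F k (t0 + 2) x" using F_strict[OF xo] r by simp
  moreover have "phi r x = F k r x" "phi (t0 + 2) x = F k (t0 + 2) x" using phi_F[of k x] xo by auto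
  ultimately show False using r by simp
qed

theorem mainTheorem16:
  shows "\<exists>(X :: real set) d phi.
     Metric_space X d \<and> compact_space (Metric_space.mtopology X d) \<and> is_flow X d phi
   \<and> \<not> singular_expansive X d phi
   \<and> (\<forall>L. L \<subseteq> X \<and> compactin (Metric_space.mtopology X d) L \<and> invariant_set phi L
          \<and> L \<inter> Sing X phi = {} \<longrightarrow> expansive_flow L d phi)"
proof (intro exI conjI allI impI)
  show "Metric_space XX dist" by (rule ms)
  show "compact_space (Metric_space.mtopology XX dist)" unfolding mtop
    by (rule compact_space_subtopology) simp
  show "is_flow XX dist phi" by (rule flow)
  show "\<not> singular_expansive XX dist phi" by (rule not_sexp)
  fix L assume L: "L \<subseteq> XX \<and> compactin (Metric_space.mtopology XX dist) L \<and> invariant_set phi L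
          \<and> L \<inter> Sing XX phi = {}"
  then have "compact L" unfolding mtop by (simp add: compactin_subtopology)
  then have "L = {}" using no_L L by blast
  thus "expansive_flow L dist phi" unfolding expansive_flow_def by simp
qed

end
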